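(* Let $C_0^2=3009$. Fix integers $1\le L_0\le K_0\le n$, integers $1\le L\le K\le n$, and a constant $s_0>0$. Let $$\mathcal S=\Big\{P\in\mathcal N(n,K,L):\ \|P-P_*\|_F\ge C_0\,2^{s_0}\sqrt{\tau(n,K_0,L_0)}\Big\}.$$ Then $$\mathbb P\Big\{\sup_{P\in\mathcal S}\Big[2\langle\Xi,P-P_*\rangle-\tfrac12\|P-P_*\|_F^2-2\Delta(n,K,L)\Big]\ge 0\Big\}\le\log_2 n\cdot\exp\big(-n\cdot 2^{2s_0-7}\big).$$
   Context: Network model: $n\ge 2$ nodes; $P_*\in[0,1]^{n\times n}$ is symmetric; $A\in\{0,1\}^{n\times n}$ is symmetric with entries $A_{ij}$, $1\le i\le j\le n$, independent, $A_{ij}\sim\mathrm{Bernoulli}((P_* )_{ij})$, and $A_{ji}=A_{ij}$. Notation: - $\Xi=A-P_*$. - $\langle M,N\rangle=\mathrm{Tr}(M^TN)$. - $\tau(n,K,L)=n\ln K+K\ln L+(K^2+2nL)\ln(9nL)$. - $\Delta(n,K,L)=C_0^2\,\tau(n,K,L)+n$. Nested Block Model class: for integers $1\le L\le K\le n$, $\mathcal N(n,K,L)$ is the set of matrices $P\in[0,1]^{n\times n}$ for which there exist a clustering function $z:\{1,\dots,n\}\to\{1,\dots,K\}$, a clustering function $c:\{1,\dots,K\}\to\{1,\dots,L\}$, a matrix $B\in[0,1]^{K\times K}$ and a matrix $H\in\mathbb R_+^{n\times L}$ such that, with $n_k=\#\{i:z(i)=k\}$, $$\sum_{i:\,z(i)=k}H_{i,l}=n_k\quad\text{for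 all }k\le K,\ l\le L,$$ and $$P_{ij}=B_{z(i),z(j)}\,H_{i,c(z(j))}\,H_{j,c(z(i))}\quad\text{for all }i,j.$$ *)

theory Defs
  imports "HOL-Probability.Probability"
begin

text \<open>Matrices are functions nat => nat => real; only indices 0..<n are relevant
  (nodes are indexed 0..n-1, communities 0..K-1 and 0..L-1).\<close>

definition edge_pmf :: "nat \<Rightarrow> (nat \<Rightarrow> nat \<Rightarrow> real) \<Rightarrow> ((nat \<times> nat) \<Rightarrow> bool) pmf" where
  "edge_pmf n Ps = Pi_pmf {(i, j). i \<le> j \<and> j < n} False (\<lambda>(i, j). bernoulli_pmf (Ps i j))"

definition adj_of :: "nat \<Rightarrow> ((nat \<times> nat) \<Rightarrow> bool) \<Rightarrow> (nat \<Rightarrow> nat \<Rightarrow> real)" where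
  "adj_of n X = (\<lambda>i j. if i < n \<and> j < n then
       (if i \<le> j then (if X (i, j) then 1 else 0) else (if X (j, i) then 1 else 0)) else 0)"

definition adj_pmf :: "nat \<Rightarrow> (nat \<Rightarrow> nat \<Rightarrow> real) \<Rightarrow> (nat \<Rightarrow> nat \<Rightarrow> real) pmf" where
  "adj_pmf n Ps = map_pmf (adj_of n) (edge_pmf n Ps)"

definition frob :: "nat \<Rightarrow> (nat \<Rightarrow> nat \<Rightarrow> real) \<Rightarrow> real" where
  "frob n M = sqrt (\<Sum>i<n. \<Sum>j<n. (M i j)\<^sup>2)"

definition minner :: "nat \<Rightarrow> (nat \<Rightarrow> nat \<Rightarrow> real) \<Rightarrow> (nat \<Rightarrow> nat \<Rightarrow> real) \<Rightarrow> real" where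
  "minner n M N = (\<Sum>i<n. \<Sum>j<n. M i j * N i j)"

definition tau :: "nat \<Rightarrow> nat \<Rightarrow> nat \<Rightarrow> real" where
  "tau n K L = real n * ln (real K) + real K * ln (real L)
     + (real K ^ 2 + 2 * real n * real L) * ln (9 * real n * real L)"

definition C0sq :: real where "C0sq = 3009"

definition Delta :: "nat \<Rightarrow> nat \<Rightarrow> nat \<Rightarrow> real" where
  "Delta n K L = C0sq * tau n K L + real n"

definition NBM :: "nat \<Rightarrow> nat \<Rightarrow> nat \<Rightarrow> (nat \<Rightarrow> nat \<Rightarrow> real) set" where
  "NBM n K L = {P. (\<forall>i<n. \<forall>j<n. 0 \<le> P i j \<and> P i j \<le> 1) \<and>
     (\<exists>(z :: nat \<Rightarrow> nat) (c :: nat \<Rightarrow> nat) (B :: nat \<Rightarrow> nat \<Rightarrow> real) (H :: nat \<Rightarrow> nat \<Rightarrow> real).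
        (\<forall>i<n. z i < K) \<and> (\<forall>k<K. c k < L) \<and>
        (\<forall>k<K. \<forall>k'<K. 0 \<le> B k k' \<and> B k k' \<le> 1) \<and>
        (\<forall>i<n. \<forall>l<L. 0 \<le> H i l) \<and>
        (\<forall>k<K. \<forall>l<L. (\<Sum>i\<in>{i. i < n \<and> z i = k}. H i l) = real (card {i. i < n \<and> z i = k})) \<and>
        (\<forall>i<n. \<forall>j<n. P i j = B (z i) (z j) * H i (c (z j)) * H j (c (z i))))}"

end

theory Submission
  imports Defs
begin

definition Iset :: "nat \<Rightarrow> (nat \<times> nat) set" where
  "Iset n = {(i, j). i \<le> j \<and> j < n}"

definition wD :: "(nat \<Rightarrow> nat \<Rightarrow> real) \<Rightarrow> nat \<times> nat \<Rightarrow> real" where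
  "wD D e = (if fst e = snd e then D (fst e) (fst e) else D (fst e) (snd e) + D (snd e) (fst e))"

lemma Iset_Suc: "Iset (Suc n) = Iset n \<union> (\<lambda>i. (i, n)) ` {..n}"
  unfolding Iset_def by auto

lemma finite_Iset: "finite (Iset n)"
proof -
  have "Iset n \<subseteq> {..<n} \<times> {..<n}" unfolding Iset_def by auto
  thus ?thesis by (rule finite_subset) auto
qed

lemma sum_sym_split:
  fixes g D :: "nat \<Rightarrow> nat \<Rightarrow> real"
  assumes "\<forall>i<N. \<forall>j<N. g i j = g j i" "m \<le> N"
  shows "(\<Sum>i<m. \<Sum>j<m. g i j * D i j) = (\<Sum>e\<in>Iset m. g (fst e) (snd e) * wD D e)"
  using assms(2)
proof (induction m)
  case 0
  then show ?case by (simp add: Iset_def)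
next
  case (Suc m)
  have disj: "Iset m \<inter> (\<lambda>i. (i, m)) ` {..m} = {}" unfolding Iset_def by auto
  have "(\<Sum>e\<in>Iset (Suc m). g (fst e) (snd e) * wD D e)
     = (\<Sum>e\<in>Iset m. g (fst e) (snd e) * wD D e) + (\<Sum>e\<in>(\<lambda>i. (i, m)) ` {..m}. g (fst e) (snd e) * wD D e)"
    unfolding Iset_Suc by (rule sum.union_disjoint) (use disj finite_Iset in auto)
  also have "(\<Sum>e\<in>(\<lambda>i. (i, m)) ` {..m}. g (fst e) (snd e) * wD D e) = (\<Sum>i\<le>m. g i m * wD D (i, m))"
    by (subst sum.reindex) (auto simp: inj_on_def)
  also have "\<dots> = (\<Sum>i<m. g i m * (D i m + D m i)) + g m m * D m m"
    by (simp add: lessThan_Suc_atMost[symmetric] wD_def)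
  also have "(\<Sum>i<m. g i m * (D i m + D m i)) = (\<Sum>i<m. g i m * D i m) + (\<Sum>j<m. g m j * D m j)"
    using assms(1) Suc.prems by (auto simp: sum.distrib algebra_simps intro!: sum.cong)
  finally show ?case using Suc
    by (simp add: sum.distrib)
qed

lemma adj_of_sym: "adj_of n X i j = adj_of n X j i"
  unfolding adj_of_def by auto

lemma minner_eq_edge:
  assumes sym: "\<forall>i<n. \<forall>j<n. Ps i j = Ps j i"
  shows "minner n (\<lambda>i j. adj_of n X i j - Ps i j) D
     = (\<Sum>e\<in>Iset n. wD D e * ((if X e then 1 else 0) - Ps (fst e) (snd e)))"
proof -
  have "minner n (\<lambda>i j. adj_of n X i j - Ps i j) D
     = (\<Sum>e\<in>Iset n. (adj_of n X (fst e) (snd e) - Ps (fst e) (snd e)) * wD D e)"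
    unfolding minner_def
    by (rule sum_sym_split[where N=n]) (use sym adj_of_sym in auto)
  also have "\<dots> = (\<Sum>e\<in>Iset n. wD D e * ((if X e then 1 else 0) - Ps (fst e) (snd e)))"
    by (intro sum.cong) (auto simp: Iset_def adj_of_def)
  finally show ?thesis .
qed

lemma sum_wD_sq:
  "(\<Sum>e\<in>Iset n. (wD D e)\<^sup>2) \<le> 2 * (\<Sum>i<n. \<Sum>j<n. (D i j)\<^sup>2)"
proof -
  have "(\<Sum>i<n. \<Sum>j<n. (D i j)\<^sup>2) = (\<Sum>i<n. \<Sum>j<n. 1 * (D i j)\<^sup>2)" by simp
  also have "\<dots> = (\<Sum>e\<in>Iset n. 1 * wD (\<lambda>i j. (D i j)\<^sup>2) e)"
    by (rule sum_sym_split[where N=n]) auto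
  finally have eq: "(\<Sum>i<n. \<Sum>j<n. (D i j)\<^sup>2) = (\<Sum>e\<in>Iset n. wD (\<lambda>i j. (D i j)\<^sup>2) e)" by simp
  have "(wD D e)\<^sup>2 \<le> 2 * wD (\<lambda>i j. (D i j)\<^sup>2) e" for e
  proof -
    have "(a + b)\<^sup>2 \<le> 2 * (a\<^sup>2 + b\<^sup>2)" for a b :: real
      by (simp add: power2_eq_square algebra_simps) (smt (verit) sum_squares_ge_zero power2_eq_square mult.commute zero_le_square[of "a-b"] power2_diff)
    then show ?thesis unfolding wD_def by (auto simp: power2_eq_square)
  qed
  hence "(\<Sum>e\<in>Iset n. (wD D e)\<^sup>2) \<le> (\<Sum>e\<in>Iset n. 2 * wD (\<lambda>i j. (D i j)\<^sup>2) e)"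
    by (rule sum_mono)
  thus ?thesis by (simp add: eq sum_distrib_left)
qed

lemma hoeff:
  assumes Ps01: "\<forall>i<n. \<forall>j<n. 0 \<le> Ps i j \<and> Ps i j \<le> 1"
    and sym: "\<forall>i<n. \<forall>j<n. Ps i j = Ps j i"
    and t: "t > 0"
  shows "measure_pmf.prob (adj_pmf n Ps) {A. minner n (\<lambda>i j. A i j - Ps i j) D \<ge> t}
       \<le> exp (- t\<^sup>2 / (\<Sum>i<n. \<Sum>j<n. (D i j)\<^sup>2))"
proof -
  define I where "I = Iset n"
  define w where "w = wD D"
  define p where "p = (\<lambda>e::nat\<times>nat. Ps (fst e) (snd e))"
  define fs where "fs = (\<Sum>i<n. \<Sum>j<n. (D i j)\<^sup>2)"
  define S2 where "S2 = (\<Sum>e\<in>I. (w e)\<^sup>2)"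
  define \<mu> where "\<mu> = (\<Sum>e\<in>I. w e * p e)"
  have finI: "finite I" unfolding I_def by (rule finite_Iset)
  have pI: "e \<in> I \<Longrightarrow> 0 \<le> p e \<and> p e \<le> 1" for e
    using Ps01 unfolding I_def Iset_def p_def by auto
  have S2fs: "S2 \<le> 2 * fs" unfolding S2_def fs_def I_def w_def by (rule sum_wD_sq)
  have "measure_pmf.prob (adj_pmf n Ps) {A. minner n (\<lambda>i j. A i j - Ps i j) D \<ge> t}
      = measure_pmf.prob (edge_pmf n Ps) {X. (\<Sum>e\<in>I. w e * (if X e then 1 else 0)) \<ge> \<mu> + t}"
    unfolding adj_pmf_def measure_map_pmf
  proof (intro arg_cong[where f="measure_pmf.prob (edge_pmf n Ps)"] set_eqI)
    fix X
    have "minner n (\<lambda>i j. adj_of n X i j - Ps i j) D = (\<Sum>e\<in>I. w e * (if X e then 1 else 0)) - \<mu>"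
      unfolding minner_eq_edge[OF sym] I_def w_def \<mu>_def p_def
      by (simp add: sum_subtractf right_diff_distrib)
    thus "X \<in> adj_of n -` {A. t \<le> minner n (\<lambda>i j. A i j - Ps i j) D}
       \<longleftrightarrow> X \<in> {X. \<mu> + t \<le> (\<Sum>e\<in>I. w e * (if X e then 1 else 0))}" by auto
  qed
  also have "\<dots> \<le> exp (- t\<^sup>2 / fs)"
  proof (cases "S2 = 0")
    case True
    hence w0: "e \<in> I \<Longrightarrow> w e = 0" for e
      unfolding S2_def using finI by (simp add: sum_nonneg_eq_0_iff)
    have "\<mu> = 0" unfolding \<mu>_def using w0 by simp
    hence "{X. (\<Sum>e\<in>I. w e * (if X e then 1 else 0)) \<ge> \<mu> + t} = {}"
      using w0 t by auto
    thus ?thesis by simp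
  next
    case False
    hence S2pos: "S2 > 0" unfolding S2_def by (simp add: sum_nonneg order_less_le)
  have mueq: "\<mu> = (\<Sum>e\<in>I. measure_pmf.expectation (edge_pmf n Ps) (\<lambda>f. w e * (if f e then 1 else 0)))"
      unfolding \<mu>_def
    proof (intro sum.cong refl)
      fix e assume e: "e \<in> I"
      have "measure_pmf.expectation (edge_pmf n Ps) (\<lambda>f. w e * (if f e then 1 else 0))
          = measure_pmf.expectation (map_pmf (\<lambda>f. f e) (edge_pmf n Ps)) (\<lambda>b. w e * (if b then 1 else 0))"
        by simp
      also have "map_pmf (\<lambda>f. f e) (edge_pmf n Ps) = bernoulli_pmf (p e)"
        unfolding edge_pmf_def using e
        by (subst Pi_pmf_component) (auto simp: finite_Iset[unfolded Iset_def] I_def Iset_def p_def split: prod.splits)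
      finally have X: "measure_pmf.expectation (edge_pmf n Ps) (\<lambda>f. w e * (if f e then 1 else 0))
          = measure_pmf.expectation (bernoulli_pmf (p e)) (\<lambda>b. w e * (if b then 1 else 0))" .
      have Y: "measure_pmf.expectation (bernoulli_pmf (p e)) (\<lambda>b. w e * (if b then 1 else 0)) = w e * p e"
        using pI[OF e] by simp
      show "w e * p e = measure_pmf.expectation (edge_pmf n Ps) (\<lambda>f. w e * (if f e then 1 else 0))"
        unfolding X Y by (rule refl)
    qed
    interpret H: Hoeffding_ineq "measure_pmf (edge_pmf n Ps)" I
      "\<lambda>e f. w e * (if f e then 1 else 0)" "\<lambda>e. min 0 (w e)" "\<lambda>e. max 0 (w e)" \<mu>
    proof unfold_locales
      show "finite I" by fact
      show "prob_space.indep_vars (measure_pmf (edge_pmf n Ps)) (\<lambda>_. borel)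
              (\<lambda>e f. w e * (if f e then 1 else 0)) I"
        unfolding edge_pmf_def I_def Iset_def
        by (intro prob_space.indep_vars_compose2[OF _ indep_vars_Pi_pmf])
           (auto simp: measure_pmf.prob_space_axioms finite_Iset[unfolded Iset_def])
      show "AE x in measure_pmf (edge_pmf n Ps). w i * (if x i then 1 else 0) \<in> {min 0 (w i)..max 0 (w i)}" for i
        by (intro AE_I2) auto
      show "\<mu> \<equiv> (\<Sum>e\<in>I. measure_pmf.expectation (edge_pmf n Ps) (\<lambda>f. w e * (if f e then 1 else 0)))" using mueq by (rule eq_reflection)
    qed
    have sq: "(\<Sum>e\<in>I. (max 0 (w e) - min 0 (w e))\<^sup>2) = S2"
      unfolding S2_def by (intro sum.cong) (auto simp: max_def min_def)
    have "measure_pmf.prob (edge_pmf n Ps) {X. (\<Sum>e\<in>I. w e * (if X e then 1 else 0)) \<ge> \<mu> + t}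
        \<le> exp (-2 * t\<^sup>2 / S2)"
    proof -
      have h: "measure_pmf.prob (edge_pmf n Ps) {x \<in> space (measure_pmf (edge_pmf n Ps)). \<mu> + t \<le> (\<Sum>e\<in>I. w e * (if x e then 1 else 0))}
          \<le> exp (-2 * t\<^sup>2 / (\<Sum>e\<in>I. (max 0 (w e) - min 0 (w e))\<^sup>2))"
        by (rule H.Hoeffding_ineq_ge) (use t S2pos sq in auto)
      then show ?thesis unfolding sq by simp
    qed
    also have "\<dots> \<le> exp (- t\<^sup>2 / fs)"
    proof -
      have fspos: "fs > 0" using S2pos S2fs by simp
      have "t\<^sup>2 / fs \<le> t\<^sup>2 / (S2 / 2)"
        by (rule divide_left_mono) (use S2pos fspos S2fs in auto)
      also have "t\<^sup>2 / (S2 / 2) = 2 * t\<^sup>2 / S2" by simp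
      finally have "t\<^sup>2 / fs \<le> 2 * t\<^sup>2 / S2" .
      thus ?thesis by simp
    qed
    finally show ?thesis .
  qed
  finally show ?thesis unfolding fs_def .
qed

definition G :: "nat \<Rightarrow> real set" where "G m = (\<lambda>j. real j / real m) ` {..m}"

definition rnd :: "nat \<Rightarrow> real \<Rightarrow> real" where "rnd m x = real (nat \<lfloor>x * real m\<rfloor>) / real m"

lemma rnd_props:
  assumes "m > 0" "0 \<le> x" "x \<le> 1"
  shows "rnd m x \<in> G m" "\<bar>x - rnd m x\<bar> \<le> 1 / real m" "0 \<le> rnd m x" "rnd m x \<le> 1"
proof -
  have m: "real m > 0" using assms by simp
  have f0: "\<lfloor>x * real m\<rfloor> \<ge> 0" using assms by simp
  have f1: "\<lfloor>x * real m\<rfloor> \<le> int m"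
  proof -
    have "x * real m \<le> real m" using assms m by (simp add: mult_left_le_one_le)
    thus ?thesis by (metis floor_mono floor_of_nat)
  qed
  have eq: "real (nat \<lfloor>x * real m\<rfloor>) = of_int \<lfloor>x * real m\<rfloor>" using f0 by simp
  show "rnd m x \<in> G m" unfolding rnd_def G_def using f1 by (intro imageI) auto
  have a: "of_int \<lfloor>x * real m\<rfloor> \<le> x * real m" by simp
  have b: "x * real m < of_int \<lfloor>x * real m\<rfloor> + 1" by linarith
  have "rnd m x = of_int \<lfloor>x * real m\<rfloor> / real m" unfolding rnd_def eq ..
  moreover have "of_int \<lfloor>x * real m\<rfloor> / real m \<le> x" using a m by (simp add: divide_le_eq)
  moreover have "x - 1 / real m \<le> of_int \<lfloor>x * real m\<rfloor> / real m"
  proof -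
    have "x - 1 / real m = (x * real m - 1) / real m" using m by (simp add: field_simps)
    also have "\<dots> \<le> of_int \<lfloor>x * real m\<rfloor> / real m" using b m by (intro divide_right_mono) auto
    finally show ?thesis .
  qed
  ultimately show "\<bar>x - rnd m x\<bar> \<le> 1 / real m" by auto
  show "0 \<le> rnd m x" unfolding rnd_def by simp
  show "rnd m x \<le> 1" unfolding rnd_def using f1 m by (simp add: divide_le_eq)
qed

lemma G_01: "y \<in> G m \<Longrightarrow> 0 \<le> y \<and> y \<le> 1"
  unfolding G_def by (auto simp: divide_le_eq)

lemma card_G: "card (G m) \<le> m + 1"
  unfolding G_def using card_image_le[of "{..m}" "\<lambda>j. real j / real m"] by simp

definition netmat :: "nat \<Rightarrow> (nat \<Rightarrow> nat) \<Rightarrow> (nat \<Rightarrow> nat) \<Rightarrow> (nat \<times> nat \<Rightarrow> real) \<Rightarrow> (nat \<times> nat \<Rightarrow> real) \<Rightarrow> (nat \<Rightarrow> nat \<Rightarrow> real)" where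
  "netmat n z c \<beta> h = (\<lambda>i j. if i < n \<and> j < n then \<beta> (z i, z j) * h (i, c (z j)) * h (j, c (z i)) else 0)"

definition Net :: "nat \<Rightarrow> nat \<Rightarrow> nat \<Rightarrow> nat \<Rightarrow> (nat \<Rightarrow> nat \<Rightarrow> real) set" where
  "Net n K L m = (\<lambda>(z, c, \<beta>, h). netmat n z c \<beta> h) `
     (({..<n} \<rightarrow>\<^sub>E {..<K}) \<times> ({..<K} \<rightarrow>\<^sub>E {..<L}) \<times> (({..<K} \<times> {..<K}) \<rightarrow>\<^sub>E G m) \<times> (({..<n} \<times> {..<L}) \<rightarrow>\<^sub>E G m))"

lemma finite_G: "finite (G m)" unfolding G_def by simp

lemma Net_finite: "finite (Net n K L m)"
  unfolding Net_def by (intro finite_imageI finite_cartesian_product finite_PiE finite_G) auto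

lemma Net_card: "real (card (Net n K L m)) \<le> real K ^ n * real L ^ K * real (m + 1) ^ (K * K + n * L)"
proof -
  let ?S = "(({..<n} \<rightarrow>\<^sub>E {..<K}) \<times> ({..<K} \<rightarrow>\<^sub>E {..<L}) \<times> (({..<K} \<times> {..<K}) \<rightarrow>\<^sub>E G m) \<times> (({..<n} \<times> {..<L}) \<rightarrow>\<^sub>E G m))"
  have "card (Net n K L m) \<le> card ?S" unfolding Net_def by (rule card_image_le) (intro finite_cartesian_product finite_PiE finite_G; auto)
  also have "card ?S = K ^ n * L ^ K * card (G m) ^ (K * K) * card (G m) ^ (n * L)"
    by (simp add: card_cartesian_product card_PiE)
  also have "\<dots> \<le> K ^ n * L ^ K * (m + 1) ^ (K * K) * (m + 1) ^ (n * L)"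
    using card_G by (intro mult_mono power_mono) auto
  also have "\<dots> = K ^ n * L ^ K * (m + 1) ^ (K * K + n * L)" by (simp add: power_add)
  finally show ?thesis by (metis of_nat_le_iff of_nat_mult of_nat_power)
qed

lemma Net_01: "Q \<in> Net n K L m \<Longrightarrow> 0 \<le> Q i j \<and> Q i j \<le> 1"
proof -
  assume "Q \<in> Net n K L m"
  then obtain z c \<beta> h where Q: "Q = netmat n z c \<beta> h" and
    z: "z \<in> {..<n} \<rightarrow>\<^sub>E {..<K}" and c: "c \<in> {..<K} \<rightarrow>\<^sub>E {..<L}" and
    b: "\<beta> \<in> ({..<K} \<times> {..<K}) \<rightarrow>\<^sub>E G m" and h: "h \<in> ({..<n} \<times> {..<L}) \<rightarrow>\<^sub>E G m"
    unfolding Net_def by auto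
  show ?thesis
  proof (cases "i < n \<and> j < n")
    case True
    have zi: "z i < K" "z j < K" using z True by auto
    have ci: "c (z j) < L" "c (z i) < L" using c zi by auto
    have "\<beta> (z i, z j) \<in> G m" using b zi by auto
    moreover have "h (i, c (z j)) \<in> G m" "h (j, c (z i)) \<in> G m" using h ci True by auto
    ultimately show ?thesis unfolding Q netmat_def using True G_01
      by (simp add: mult_le_one)
  next
    case False thus ?thesis by (auto simp: Q netmat_def)
  qed
qed

lemma prod3_diff:
  fixes a b c a' b' c' :: real
  assumes "0 \<le> a" "a \<le> 1" "0 \<le> b" "b \<le> 1" "0 \<le> c" "c \<le> 1"
    "0 \<le> a'" "a' \<le> 1" "0 \<le> b'" "b' \<le> 1" "0 \<le> c'" "c' \<le> 1"
  shows "\<bar>a * b * c - a' * b' * c'\<bar> \<le> \<bar>a - a'\<bar> + \<bar>b - b'\<bar> + \<bar>c - c'\<bar>"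
proof -
  have e: "a * b * c - a' * b' * c' = (a - a') * (b * c) + a' * ((b - b') * c) + a' * b' * (c - c')"
    by (simp add: algebra_simps)
  have 1: "\<bar>(a - a') * (b * c)\<bar> \<le> \<bar>a - a'\<bar>"
    using assms by (simp add: abs_mult mult_le_one mult_left_le)
  have 2: "\<bar>a' * ((b - b') * c)\<bar> \<le> \<bar>b - b'\<bar>"
    using assms by (simp add: abs_mult) (metis abs_ge_zero mult.assoc mult_left_le mult_le_one mult_right_le_one_le mult.commute mult_nonneg_nonneg)
  have 3: "\<bar>a' * b' * (c - c')\<bar> \<le> \<bar>c - c'\<bar>"
  proof -
    have "0 \<le> a' * b'" "a' * b' \<le> 1" using assms by (auto simp: mult_le_one)
    thus ?thesis by (simp add: abs_mult mult_left_le_one_le)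
  qed
  show ?thesis unfolding e using 1 2 3 abs_triangle_ineq[of "(a - a') * (b * c) + a' * ((b - b') * c)" "a' * b' * (c - c')"]
    abs_triangle_ineq[of "(a - a') * (b * c)" "a' * ((b - b') * c)"] by linarith
qed

lemma NBM_rep:
  assumes "P \<in> NBM n K L"
  shows "\<exists>z c \<beta> h. (\<forall>i<n. z i < K) \<and> (\<forall>k<K. c k < L)
     \<and> (\<forall>k<K. \<forall>k'<K. 0 \<le> \<beta> (k, k') \<and> \<beta> (k, k') \<le> 1)
     \<and> (\<forall>i<n. \<forall>l<L. 0 \<le> h (i, l) \<and> h (i, l) \<le> 1)
     \<and> (\<forall>i<n. \<forall>j<n. P i j = \<beta> (z i, z j) * h (i, c (z j)) * h (j, c (z i)))"
proof -
  have mem: "(\<forall>i<n. \<forall>j<n. 0 \<le> P i j \<and> P i j \<le> 1) \<and>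
     (\<exists>(z :: nat \<Rightarrow> nat) (c :: nat \<Rightarrow> nat) (B :: nat \<Rightarrow> nat \<Rightarrow> real) (H :: nat \<Rightarrow> nat \<Rightarrow> real).
        (\<forall>i<n. z i < K) \<and> (\<forall>k<K. c k < L) \<and>
        (\<forall>k<K. \<forall>k'<K. 0 \<le> B k k' \<and> B k k' \<le> 1) \<and>
        (\<forall>i<n. \<forall>l<L. 0 \<le> H i l) \<and>
        (\<forall>k<K. \<forall>l<L. (\<Sum>i\<in>{i. i < n \<and> z i = k}. H i l) = real (card {i. i < n \<and> z i = k})) \<and>
        (\<forall>i<n. \<forall>j<n. P i j = B (z i) (z j) * H i (c (z j)) * H j (c (z i))))"
    using assms unfolding NBM_def by (rule CollectD)
  hence P01: "\<forall>i<n. \<forall>j<n. 0 \<le> P i j \<and> P i j \<le> 1" by (rule conjunct1)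
  from conjunct2[OF mem] obtain z c B H where all:
    "(\<forall>i<n. z i < K) \<and> (\<forall>k<K. c k < L) \<and>
        (\<forall>k<K. \<forall>k'<K. 0 \<le> B k k' \<and> B k k' \<le> 1) \<and>
        (\<forall>i<n. \<forall>l<L. 0 \<le> H i l) \<and>
        (\<forall>k<K. \<forall>l<L. (\<Sum>i\<in>{i. i < n \<and> z i = k}. H i l) = real (card {i. i < n \<and> z i = k})) \<and>
        (\<forall>i<n. \<forall>j<n. P i j = B (z i) (z j) * H i (c (z j)) * H j (c (z i)))"
    by (elim exE) (rule that)
  have z: "\<forall>i<n. z i < K" using all by (rule conjunct1)
  have c: "\<forall>k<K. c k < L" using all by (elim conjE)
  have H0: "\<forall>i<n. \<forall>l<L. 0 \<le> H i l" using all by (elim conjE)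
  have PE: "\<forall>i<n. \<forall>j<n. P i j = B (z i) (z j) * H i (c (z j)) * H j (c (z i))" using all by (elim conjE)
  define Sb where "Sb k = {i. i < n \<and> z i = k}" for k
  define M where "M k l = (if Sb k = {} then 0 else Max ((\<lambda>i. H i l) ` Sb k))" for k l
  have finSb: "finite (Sb k)" for k unfolding Sb_def by simp
  have HM: "H i l \<le> M (z i) l" if "i < n" for i l
  proof -
    have "i \<in> Sb (z i)" using that unfolding Sb_def by simp
    thus ?thesis unfolding M_def using finSb by (auto intro!: Max_ge)
  qed
  have M0: "0 \<le> M (z i) l" if "i < n" "l < L" for i l
  proof -
    have "0 \<le> H i l" using H0 that by blast
    thus ?thesis using HM[OF that(1), of l] by linarith
  qed
  have att: "\<exists>i\<in>Sb k. H i l = M k l" if "Sb k \<noteq> {}" for k l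
  proof -
    have "M k l \<in> (\<lambda>i. H i l) ` Sb k" unfolding M_def using that finSb by (simp add: Max_in)
    thus ?thesis by auto
  qed
  define h where "h e = (if M (z (fst e)) (snd e) > 0 then H (fst e) (snd e) / M (z (fst e)) (snd e) else 0)" for e
  define \<beta> where "\<beta> e = (if Sb (fst e) \<noteq> {} \<and> Sb (snd e) \<noteq> {}
       then B (fst e) (snd e) * M (fst e) (c (snd e)) * M (snd e) (c (fst e)) else 0)" for e
  have Mh: "M (z i) l * h (i, l) = H i l" if "i < n" "l < L" for i l
  proof (cases "M (z i) l > 0")
    case True thus ?thesis unfolding h_def by simp
  next
    case False
    hence "M (z i) l = 0" using M0[OF that] by simp
    moreover have "H i l = 0" using HM[OF that(1), of l] H0 that \<open>M (z i) l = 0\<close> by force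
    ultimately show ?thesis by simp
  qed
  have hb: "0 \<le> h (i, l) \<and> h (i, l) \<le> 1" if "i < n" "l < L" for i l
    unfolding h_def using HM[OF that(1), of l] H0 that by (auto simp: divide_le_eq)
  have Pe: "P i j = \<beta> (z i, z j) * h (i, c (z j)) * h (j, c (z i))" if "i < n" "j < n" for i j
  proof -
    have ne: "Sb (z i) \<noteq> {}" "Sb (z j) \<noteq> {}" using that unfolding Sb_def by auto
    have cl: "c (z j) < L" "c (z i) < L" using c z that by auto
    have "P i j = B (z i) (z j) * (M (z i) (c (z j)) * h (i, c (z j))) * (M (z j) (c (z i)) * h (j, c (z i)))"
      using PE that Mh[OF that(1) cl(1)] Mh[OF that(2) cl(2)] by simp
    also have "\<dots> = \<beta> (z i, z j) * h (i, c (z j)) * h (j, c (z i))"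
      unfolding \<beta>_def using ne by (simp add: algebra_simps)
    finally show ?thesis .
  qed
  have bb: "0 \<le> \<beta> (k, k') \<and> \<beta> (k, k') \<le> 1" if "k < K" "k' < K" for k k'
  proof (cases "Sb k \<noteq> {} \<and> Sb k' \<noteq> {}")
    case True
    obtain i where i: "i \<in> Sb k" "H i (c k') = M k (c k')" using att True by blast
    obtain j where j: "j \<in> Sb k'" "H j (c k) = M k' (c k)" using att True by blast
    have ij: "i < n" "j < n" "z i = k" "z j = k'" using i j unfolding Sb_def by auto
    have "P i j = B k k' * H i (c k') * H j (c k)" using PE ij by simp
    also have "\<dots> = \<beta> (k, k')" unfolding \<beta>_def using True i(2) j(2) by simp
    finally have e: "P i j = \<beta> (k, k')" .
    have "0 \<le> P i j \<and> P i j \<le> 1" using P01 ij(1,2) by blast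
    thus ?thesis using e by simp
  next
    case False thus ?thesis unfolding \<beta>_def by auto
  qed
  show ?thesis
    apply (rule exI[of _ z], rule exI[of _ c], rule exI[of _ \<beta>], rule exI[of _ h])
    apply (intro conjI allI impI)
    using z c bb hb Pe by simp_all
qed

lemma NBM_approx:
  assumes "P \<in> NBM n K L" "m > 0"
  shows "\<exists>Q\<in>Net n K L m. \<forall>i<n. \<forall>j<n. \<bar>P i j - Q i j\<bar> \<le> 3 / real m"
proof -
  obtain z c \<beta> h where z: "\<forall>i<n. z i < K" and c: "\<forall>k<K. c k < L"
     and bb: "\<forall>k<K. \<forall>k'<K. 0 \<le> \<beta> (k, k') \<and> \<beta> (k, k') \<le> 1"
     and hb: "\<forall>i<n. \<forall>l<L. 0 \<le> h (i, l) \<and> h (i, l) \<le> 1"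
     and Pe: "\<forall>i<n. \<forall>j<n. P i j = \<beta> (z i, z j) * h (i, c (z j)) * h (j, c (z i))"
    using NBM_rep[OF assms(1)] by blast
  define z' where "z' = restrict z {..<n}"
  define c' where "c' = restrict c {..<K}"
  define \<beta>' where "\<beta>' = restrict (\<lambda>e. rnd m (\<beta> e)) ({..<K} \<times> {..<K})"
  define h' where "h' = restrict (\<lambda>e. rnd m (h e)) ({..<n} \<times> {..<L})"
  define Q where "Q = netmat n z' c' \<beta>' h'"
  have QN: "Q \<in> Net n K L m"
    unfolding Net_def Q_def
  proof (rule image_eqI[where x="(z', c', \<beta>', h')"])
    show "(z', c', \<beta>', h') \<in> ({..<n} \<rightarrow>\<^sub>E {..<K}) \<times> ({..<K} \<rightarrow>\<^sub>E {..<L}) \<times> (({..<K} \<times> {..<K}) \<rightarrow>\<^sub>E G m) \<times> (({..<n} \<times> {..<L}) \<rightarrow>\<^sub>E G m)"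
      unfolding z'_def c'_def \<beta>'_def h'_def using z c bb hb rnd_props(1)[OF assms(2)] by auto
  qed simp
  have "\<bar>P i j - Q i j\<bar> \<le> 3 / real m" if ij: "i < n" "j < n" for i j
  proof -
    have zz: "z i < K" "z j < K" using z ij by auto
    have cc: "c (z j) < L" "c (z i) < L" using c zz by auto
    have Qe: "Q i j = rnd m (\<beta> (z i, z j)) * rnd m (h (i, c (z j))) * rnd m (h (j, c (z i)))"
      unfolding Q_def netmat_def z'_def c'_def \<beta>'_def h'_def using ij zz cc by simp
    have b1: "0 \<le> \<beta> (z i, z j)" "\<beta> (z i, z j) \<le> 1" using bb zz by auto
    have h1: "0 \<le> h (i, c (z j))" "h (i, c (z j)) \<le> 1" "0 \<le> h (j, c (z i))" "h (j, c (z i)) \<le> 1"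
      using hb ij cc by auto
    note R = rnd_props[OF assms(2)]
    have "\<bar>P i j - Q i j\<bar> \<le> \<bar>\<beta> (z i, z j) - rnd m (\<beta> (z i, z j))\<bar> + \<bar>h (i, c (z j)) - rnd m (h (i, c (z j)))\<bar>
        + \<bar>h (j, c (z i)) - rnd m (h (j, c (z i)))\<bar>"
      unfolding Qe Pe[rule_format, OF ij]
      by (rule prod3_diff) (use b1 h1 R(3,4) in auto)
    also have "\<dots> \<le> 1 / real m + 1 / real m + 1 / real m"
      using R(2) b1 h1 by (intro add_mono) auto
    finally show ?thesis by simp
  qed
  thus ?thesis using QN by blast
qed

lemma ln18: "2 \<le> ln (18::real)"
proof -
  have "exp (2::real) = exp 1 * exp 1" by (simp flip: exp_add)
  also have "\<dots> \<le> 3 * 3" using exp_le by (intro mult_mono) auto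
  finally have "exp (2::real) \<le> 18" by simp
  thus ?thesis by (metis exp_gt_zero exp_le_cancel_iff exp_ln order.trans zero_less_numeral)
qed

lemma tau_ge:
  assumes "1 \<le> L" "L \<le> K" "2 \<le> n"
  shows "4 * real n \<le> tau n K L"
proof -
  have l1: "0 \<le> real n * ln (real K)" using assms by simp
  have l2: "0 \<le> real K * ln (real L)" using assms by simp
  have "2 * 1 \<le> real n * real L" by (rule mult_mono) (use assms in auto)
  then have nL: "2 \<le> real n * real L" by simp
  have "9 * real n * real L = 9 * (real n * real L)" by simp
  hence "18 \<le> 9 * real n * real L" using nL by linarith
  hence "ln 18 \<le> ln (9 * real n * real L)" by simp
  hence ln9: "2 \<le> ln (9 * real n * real L)" using ln18 by linarith
  have "real n * 1 \<le> real n * real L" using assms by (intro mult_left_mono) auto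
  hence "2 * real n \<le> real K ^ 2 + 2 * real n * real L" by (simp add: zero_le_power2 add_increasing)
  hence "2 * real n * 2 \<le> (real K ^ 2 + 2 * real n * real L) * ln (9 * real n * real L)"
    using ln9 by (intro mult_mono) auto
  thus ?thesis unfolding tau_def using l1 l2 by linarith
qed

lemma sum_diff_bound:
  fixes f g :: "nat \<Rightarrow> nat \<Rightarrow> real"
  assumes "\<forall>i<n. \<forall>j<n. \<bar>f i j - g i j\<bar> \<le> e"
  shows "\<bar>(\<Sum>i<n. \<Sum>j<n. f i j) - (\<Sum>i<n. \<Sum>j<n. g i j)\<bar> \<le> real n * real n * e"
proof -
  have "\<bar>(\<Sum>i<n. \<Sum>j<n. f i j) - (\<Sum>i<n. \<Sum>j<n. g i j)\<bar> = \<bar>\<Sum>i<n. \<Sum>j<n. f i j - g i j\<bar>"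
    by (simp add: sum_subtractf)
  also have "\<dots> \<le> (\<Sum>i<n. \<bar>\<Sum>j<n. f i j - g i j\<bar>)" by (rule sum_abs)
  also have "\<dots> \<le> (\<Sum>i<n. \<Sum>j<n. \<bar>f i j - g i j\<bar>)" by (intro sum_mono sum_abs)
  also have "\<dots> \<le> (\<Sum>i<n. \<Sum>j<n. e)" using assms by (intro sum_mono) auto
  finally show ?thesis by simp
qed

lemma frob_sq: "(frob n M)\<^sup>2 = (\<Sum>i<n. \<Sum>j<n. (M i j)\<^sup>2)"
  unfolding frob_def by (simp add: sum_nonneg)

lemma key_det:
  fixes X dP dQ :: "nat \<Rightarrow> nat \<Rightarrow> real"
  assumes n: "n > 0"
    and X: "\<forall>i<n. \<forall>j<n. \<bar>X i j\<bar> \<le> 1"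
    and dP: "\<forall>i<n. \<forall>j<n. \<bar>dP i j\<bar> \<le> 1"
    and dQ: "\<forall>i<n. \<forall>j<n. \<bar>dQ i j\<bar> \<le> 1"
    and dPQ: "\<forall>i<n. \<forall>j<n. \<bar>dP i j - dQ i j\<bar> \<le> 3 / (real n * real n)"
    and F: "2 * minner n X dP - 1/2 * (frob n dP)\<^sup>2 - 2 * Dl > -1"
    and R: "0 \<le> R" "R \<le> frob n dP"
  shows "minner n X dQ \<ge> (\<Sum>i<n. \<Sum>j<n. (dQ i j)\<^sup>2) / 4 + Dl - 5"
    and "R\<^sup>2 - 6 \<le> (\<Sum>i<n. \<Sum>j<n. (dQ i j)\<^sup>2)"
proof -
  define e where "e = 3 / (real n * real n)"
  have ne: "real n * real n * e = 3" unfolding e_def using n by simp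
  have "\<forall>i<n. \<forall>j<n. \<bar>X i j * dP i j - X i j * dQ i j\<bar> \<le> e"
  proof (intro allI impI)
    fix i j assume ij: "i < n" "j < n"
    have "\<bar>X i j * dP i j - X i j * dQ i j\<bar> = \<bar>X i j\<bar> * \<bar>dP i j - dQ i j\<bar>"
      by (simp add: abs_mult right_diff_distrib[symmetric])
    also have "\<dots> \<le> 1 * e" using X dPQ ij unfolding e_def by (intro mult_mono) auto
    finally show "\<bar>X i j * dP i j - X i j * dQ i j\<bar> \<le> e" by simp
  qed
  from sum_diff_bound[OF this] have M: "\<bar>minner n X dP - minner n X dQ\<bar> \<le> 3"
    unfolding minner_def ne .
  have "\<forall>i<n. \<forall>j<n. \<bar>(dP i j)\<^sup>2 - (dQ i j)\<^sup>2\<bar> \<le> e * 2"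
  proof (intro allI impI)
    fix i j assume ij: "i < n" "j < n"
    have "\<bar>(dP i j)\<^sup>2 - (dQ i j)\<^sup>2\<bar> = \<bar>dP i j - dQ i j\<bar> * \<bar>dP i j + dQ i j\<bar>"
      by (simp add: abs_mult power2_eq_square algebra_simps flip: abs_mult)
    also have "\<dots> \<le> e * 2"
    proof (intro mult_mono)
      show "\<bar>dP i j - dQ i j\<bar> \<le> e" using dPQ ij unfolding e_def by auto
      show "\<bar>dP i j + dQ i j\<bar> \<le> 2" using dP dQ ij abs_triangle_ineq[of "dP i j" "dQ i j"] by force
      show "0 \<le> e" unfolding e_def by simp
    qed simp
    finally show "\<bar>(dP i j)\<^sup>2 - (dQ i j)\<^sup>2\<bar> \<le> e * 2" .
  qed
  from sum_diff_bound[OF this] have FS: "\<bar>(frob n dP)\<^sup>2 - (\<Sum>i<n. \<Sum>j<n. (dQ i j)\<^sup>2)\<bar> \<le> 6"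
    unfolding frob_sq using ne by (simp add: mult.assoc[symmetric])
  have "R\<^sup>2 \<le> (frob n dP)\<^sup>2" using R by (intro power_mono) auto
  thus "R\<^sup>2 - 6 \<le> (\<Sum>i<n. \<Sum>j<n. (dQ i j)\<^sup>2)" using FS by linarith
  show "minner n X dQ \<ge> (\<Sum>i<n. \<Sum>j<n. (dQ i j)\<^sup>2) / 4 + Dl - 5"
    using M FS F by linarith
qed

lemma exp_ratio:
  fixes f b r :: real
  assumes "0 < f" "r \<le> f" "0 \<le> b"
  shows "exp (- (f / 4 + b)\<^sup>2 / f) \<le> exp (- r / 16 - b / 2)"
proof -
  have "(f / 4 + b)\<^sup>2 = f * (f / 16 + b / 2) + b\<^sup>2" by (simp add: power2_eq_square field_simps)
  hence "(f / 4 + b)\<^sup>2 / f = f / 16 + b / 2 + b\<^sup>2 / f" using assms by (simp add: field_simps)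
  moreover have "0 \<le> b\<^sup>2 / f" using assms by simp
  ultimately have "r / 16 + b / 2 \<le> (f / 4 + b)\<^sup>2 / f" using assms by linarith
  thus ?thesis by simp
qed

lemma card_bound:
  assumes "1 \<le> L" "L \<le> K" "2 \<le> n"
  shows "real (card (Net n K L (n * n))) * exp (- (Delta n K L - 5) / 2) \<le> 1"
proof -
  define N where "N = real (card (Net n K L (n * n)))"
  have K1: "1 \<le> K" using assms by simp
  have tau: "4 * real n \<le> tau n K L" by (rule tau_ge[OF assms])
  define Bd where "Bd = real K ^ n * real L ^ K * real (n * n + 1) ^ (K * K + n * L)"
  have Bpos: "Bd > 0" unfolding Bd_def using assms by (intro mult_pos_pos zero_less_power) (auto intro: add_pos_nonneg)
  have NB: "N \<le> Bd" unfolding N_def Bd_def by (rule Net_card)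
  have lnB: "ln Bd = real n * ln (real K) + real K * ln (real L) + real (K * K + n * L) * ln (real (n * n + 1))"
  proof -
    have q: "0 < real (n*n+1)" by (simp only: of_nat_0_less_iff)
    have p1: "0 < real K ^ n" "0 < real L ^ K" "0 < real (n*n+1) ^ (K*K+n*L)" using assms q
      by (intro zero_less_power; simp)+
    have "ln Bd = ln (real K ^ n) + ln (real L ^ K) + ln (real (n*n+1) ^ (K*K+n*L))"
      unfolding Bd_def ln_mult_pos[OF mult_pos_pos[OF p1(1,2)] p1(3)] ln_mult_pos[OF p1(1,2)] ..
    also have "\<dots> = real n * ln (real K) + real K * ln (real L) + real (K * K + n * L) * ln (real (n * n + 1))"
      by (subst (1 2 3) ln_realpow) (use assms in auto)
    finally show ?thesis .
  qed
  have lnsq: "ln (real (n * n + 1)) \<le> 2 * ln (9 * real n * real L)"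
  proof -
    have "real (n * n + 1) \<le> (9 * real n * real L)\<^sup>2"
    proof -
      have "1 * 1 \<le> real n * real n" by (rule mult_mono) (use assms in auto)
      hence "real n * real n + 1 \<le> 81 * (real n * real n) * 1" by simp
      also have "\<dots> \<le> 81 * (real n * real n) * (real L * real L)"
        using assms by (intro mult_left_mono) (auto simp: one_le_power[of "real L" 2, simplified power2_eq_square])
      finally show ?thesis by (simp add: power2_eq_square algebra_simps)
    qed
    hence "ln (real (n * n + 1)) \<le> ln ((9 * real n * real L)\<^sup>2)"
      by (rule ln_mono) (simp only: of_nat_0_less_iff)
    also have "\<dots> = 2 * ln (9 * real n * real L)" by (simp only: ln_realpow)
    finally show ?thesis .
  qed
  have lnpos: "0 \<le> ln (9 * real n * real L)"
  proof -
    have "1 * 1 \<le> real n * real L" by (rule mult_mono) (use assms in auto)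
    moreover have "9 * real n * real L = 9 * (real n * real L)" by simp
    ultimately have "1 \<le> 9 * real n * real L" by linarith
    thus ?thesis by (rule ln_ge_zero)
  qed
  have a: "real (K * K + n * L) * ln (real (n * n + 1)) \<le> real (K * K + n * L) * (2 * ln (9 * real n * real L))"
    by (intro mult_left_mono lnsq) simp
  have b: "real (K * K + n * L) \<le> real K ^ 2 + 2 * real n * real L" by (simp add: power2_eq_square)
  have b': "real (K * K + n * L) * (2 * ln (9 * real n * real L)) \<le> (real K ^ 2 + 2 * real n * real L) * (2 * ln (9 * real n * real L))"
    using b lnpos by (intro mult_right_mono) auto
  have c1: "0 \<le> real n * ln (real K)" "0 \<le> real K * ln (real L)" using assms by auto
  have e2: "(real K ^ 2 + 2 * real n * real L) * (2 * ln (9 * real n * real L)) = 2 * ((real K ^ 2 + 2 * real n * real L) * ln (9 * real n * real L))" by simp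
  have c2: "real (K * K + n * L) * ln (real (n * n + 1)) \<le> 2 * ((real K ^ 2 + 2 * real n * real L) * ln (9 * real n * real L))"
    using a b' e2 by linarith
  have "ln Bd \<le> 2 * tau n K L" unfolding lnB tau_def
    using c1 c2 by (simp only: distrib_left)
  also have "2 * tau n K L \<le> (Delta n K L - 5) / 2" unfolding Delta_def C0sq_def using tau assms by simp
  finally have lB: "ln Bd \<le> (Delta n K L - 5) / 2" .
  have "N \<le> exp ((Delta n K L - 5) / 2)"
    using NB Bpos lB by (metis exp_le_cancel_iff exp_ln order.trans)
  hence "N * exp (- (Delta n K L - 5) / 2) \<le> exp ((Delta n K L - 5) / 2) * exp (- (Delta n K L - 5) / 2)"
    by (intro mult_right_mono) auto
  also have "\<dots> = 1" by (simp flip: exp_add add: field_simps)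
  finally show ?thesis unfolding N_def .
qed

lemma NBM_01: "P \<in> NBM n K L \<Longrightarrow> i < n \<Longrightarrow> j < n \<Longrightarrow> 0 \<le> P i j \<and> P i j \<le> 1"
proof -
  assume a: "P \<in> NBM n K L" "i < n" "j < n"
  have "\<forall>i<n. \<forall>j<n. 0 \<le> P i j \<and> P i j \<le> 1"
    using a(1) unfolding NBM_def mem_Collect_eq by (rule conjunct1)
  thus ?thesis using a(2,3) by simp
qed

lemma adj_support:
  assumes "A \<in> set_pmf (adj_pmf n Ps)" "i < n" "j < n"
  shows "A i j = 0 \<or> A i j = 1"
proof -
  obtain X where "A = adj_of n X" using assms(1) unfolding adj_pmf_def by auto
  thus ?thesis unfolding adj_of_def by auto
qed

theorem lemma4:
  fixes n K L K0 L0 :: nat and s0 :: real and Ps :: "nat \<Rightarrow> nat \<Rightarrow> real"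
  assumes "n \<ge> 2"
    and "1 \<le> L0" "L0 \<le> K0" "K0 \<le> n"
    and "1 \<le> L" "L \<le> K" "K \<le> n"
    and "s0 > 0"
    and "\<forall>i<n. \<forall>j<n. 0 \<le> Ps i j \<and> Ps i j \<le> 1"
    and "\<forall>i<n. \<forall>j<n. Ps i j = Ps j i"
  shows "measure_pmf.prob (adj_pmf n Ps)
      {A. (SUP P\<in>{P \<in> NBM n K L.
                 frob n (\<lambda>i j. P i j - Ps i j) \<ge> sqrt C0sq * 2 powr s0 * sqrt (tau n K0 L0)}.
             ereal (2 * minner n (\<lambda>i j. A i j - Ps i j) (\<lambda>i j. P i j - Ps i j)
                    - (1/2) * (frob n (\<lambda>i j. P i j - Ps i j))\<^sup>2 - 2 * Delta n K L)) \<ge> 0}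
    \<le> log 2 (real n) * exp (- real n * 2 powr (2 * s0 - 7))"
  (is "measure_pmf.prob _ ?E \<le> _")
proof -
  note n2 = assms(1) and Ps01 = assms(9) and sym = assms(10)
  define p where "p = adj_pmf n Ps"
  define R where "R = sqrt C0sq * 2 powr s0 * sqrt (tau n K0 L0)"
  define Dl where "Dl = Delta n K L"
  define m where "m = n * n"
  define Nt where "Nt = Net n K L m"
  define fsq where "fsq Q = (\<Sum>i<n. \<Sum>j<n. (Q i j - Ps i j)\<^sup>2)" for Q :: "nat \<Rightarrow> nat \<Rightarrow> real"
  define N' where "N' = {Q \<in> Nt. R\<^sup>2 - 6 \<le> fsq Q}"
  define T where "T Q = fsq Q / 4 + Dl - 5" for Q
  define EV where "EV Q = {A. minner n (\<lambda>i j. A i j - Ps i j) (\<lambda>i j. Q i j - Ps i j) \<ge> T Q}" for Q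
  have npos: "n > 0" using n2 by simp
  have mpos: "m > 0" unfolding m_def using npos by simp
  have tau0: "4 * real n \<le> tau n K0 L0" by (rule tau_ge) (use assms in auto)
  have tau1: "4 * real n \<le> tau n K L" by (rule tau_ge) (use assms in auto)
  have Dl5: "Dl - 5 \<ge> 0" unfolding Dl_def Delta_def C0sq_def using tau1 n2 by simp
  have R0: "0 \<le> R" unfolding R_def C0sq_def using tau0 by simp
  define x where "x = (2 powr s0)\<^sup>2"
  have "1 \<le> 2 powr s0" using assms(8) by (intro ge_one_powr_ge_zero) auto
  hence x1: "1 \<le> x" unfolding x_def by (rule one_le_power)
  have R2: "R\<^sup>2 = C0sq * x * tau n K0 L0"
    unfolding R_def x_def using tau0 by (simp add: power_mult_distrib C0sq_def)
  have xt: "x * (4 * real n) \<le> x * tau n K0 L0" using tau0 x1 by (intro mult_left_mono) auto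
  have x8: "1 * 8 \<le> x * (4 * real n)" by (rule mult_mono) (use x1 n2 in auto)
  have R2': "R\<^sup>2 = 3009 * (x * tau n K0 L0)" unfolding R2 C0sq_def by simp
  have R6: "R\<^sup>2 - 6 > 0" unfolding R2' using xt x8 by linarith
  have cover: "?E \<inter> set_pmf p \<subseteq> (\<Union>Q\<in>N'. EV Q)"
  proof
    fix A assume A: "A \<in> ?E \<inter> set_pmf p"
    define S where "S = {P \<in> NBM n K L. frob n (\<lambda>i j. P i j - Ps i j) \<ge> R}"
    define F where "F P = 2 * minner n (\<lambda>i j. A i j - Ps i j) (\<lambda>i j. P i j - Ps i j)
                    - (1/2) * (frob n (\<lambda>i j. P i j - Ps i j))\<^sup>2 - 2 * Dl" for P
    have AE: "A \<in> ?E" using A by blast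
    have "0 \<le> (SUP P\<in>S. ereal (F P))" using AE unfolding S_def F_def R_def Dl_def mem_Collect_eq .
    hence "ereal (-1) < (SUP P\<in>S. ereal (F P))" by (rule less_le_trans[rotated]) simp
    then obtain P where PS: "P \<in> S" and FP: "ereal (-1) < ereal (F P)" by (auto simp: less_SUP_iff)
    have PN: "P \<in> NBM n K L" and PR: "R \<le> frob n (\<lambda>i j. P i j - Ps i j)" using PS unfolding S_def by auto
    obtain Q where QN: "Q \<in> Nt" and PQ: "\<forall>i<n. \<forall>j<n. \<bar>P i j - Q i j\<bar> \<le> 3 / real m"
      using NBM_approx[OF PN mpos] unfolding Nt_def by blast
    have Asup: "A \<in> set_pmf (adj_pmf n Ps)" using A unfolding p_def by simp
    have h1: "\<forall>i<n. \<forall>j<n. \<bar>A i j - Ps i j\<bar> \<le> 1"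
      using adj_support[OF Asup] Ps01 by fastforce
    have h2: "\<forall>i<n. \<forall>j<n. \<bar>P i j - Ps i j\<bar> \<le> 1"
      using NBM_01[OF PN] Ps01 by fastforce
    have h3: "\<forall>i<n. \<forall>j<n. \<bar>Q i j - Ps i j\<bar> \<le> 1"
    proof (intro allI impI)
      fix i j assume ij: "i < n" "j < n"
      have "0 \<le> Q i j \<and> Q i j \<le> 1" by (rule Net_01[OF QN[unfolded Nt_def]])
      moreover have "0 \<le> Ps i j \<and> Ps i j \<le> 1" using Ps01 ij by blast
      ultimately show "\<bar>Q i j - Ps i j\<bar> \<le> 1" by linarith
    qed
    have h4: "\<forall>i<n. \<forall>j<n. \<bar>(P i j - Ps i j) - (Q i j - Ps i j)\<bar> \<le> 3 / (real n * real n)"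
      using PQ unfolding m_def by simp
    have h5: "2 * minner n (\<lambda>i j. A i j - Ps i j) (\<lambda>i j. P i j - Ps i j) - 1 / 2 * (frob n (\<lambda>i j. P i j - Ps i j))\<^sup>2 - 2 * Dl > - 1"
      using FP unfolding F_def by simp
    note k = key_det[OF npos h1 h2 h3 h4 h5 R0 PR]
    have "Q \<in> N'" unfolding N'_def fsq_def using QN k(2) by simp
    moreover have "A \<in> EV Q" unfolding EV_def T_def fsq_def using k(1) by simp
    ultimately show "A \<in> (\<Union>Q\<in>N'. EV Q)" by blast
  qed
  have finN': "finite N'" unfolding N'_def Nt_def using Net_finite by simp
  have each: "measure_pmf.prob p (EV Q) \<le> exp (- (R\<^sup>2 - 6) / 16 - (Dl - 5) / 2)" if Q: "Q \<in> N'" for Q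
  proof -
    have fQ: "R\<^sup>2 - 6 \<le> fsq Q" using Q unfolding N'_def by simp
    have fpos: "fsq Q > 0" using fQ R6 by linarith
    have Tpos: "T Q > 0" unfolding T_def using fpos Dl5 by simp
    have "measure_pmf.prob p (EV Q) \<le> exp (- (T Q)\<^sup>2 / (\<Sum>i<n. \<Sum>j<n. ((\<lambda>i j. Q i j - Ps i j) i j)\<^sup>2))"
      unfolding p_def EV_def by (rule hoeff[OF Ps01 sym Tpos])
    also have "\<dots> = exp (- (fsq Q / 4 + (Dl - 5))\<^sup>2 / fsq Q)" unfolding fsq_def T_def by (simp add: algebra_simps)
    also have "\<dots> \<le> exp (- (R\<^sup>2 - 6) / 16 - (Dl - 5) / 2)"
      by (rule exp_ratio[OF fpos fQ Dl5])
    finally show ?thesis .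
  qed
  have "measure_pmf.prob p ?E = measure_pmf.prob p (?E \<inter> set_pmf p)"
    by (simp add: measure_Int_set_pmf)
  also have "\<dots> \<le> measure_pmf.prob p (\<Union>Q\<in>N'. EV Q)"
    by (rule measure_pmf.finite_measure_mono[OF cover]) simp
  also have "\<dots> \<le> (\<Sum>Q\<in>N'. measure_pmf.prob p (EV Q))"
    by (rule measure_pmf.finite_measure_subadditive_finite[OF finN']) simp
  also have "\<dots> \<le> (\<Sum>Q\<in>N'. exp (- (R\<^sup>2 - 6) / 16 - (Dl - 5) / 2))"
    by (rule sum_mono) (rule each)
  also have "\<dots> = real (card N') * exp (- (Dl - 5) / 2) * exp (- (R\<^sup>2 - 6) / 16)"
    by (simp flip: exp_add add: field_simps)
  also have "\<dots> \<le> real (card Nt) * exp (- (Dl - 5) / 2) * exp (- (R\<^sup>2 - 6) / 16)"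
  proof -
    have "card N' \<le> card Nt" unfolding N'_def Nt_def by (intro card_mono Net_finite) auto
    thus ?thesis by (intro mult_right_mono) auto
  qed
  also have "\<dots> \<le> 1 * exp (- (R\<^sup>2 - 6) / 16)"
    using card_bound[of L K n] assms unfolding Nt_def m_def Dl_def by (intro mult_right_mono) auto
  also have "\<dots> \<le> exp (- real n * 2 powr (2 * s0 - 7))"
  proof -
    have pw: "2 powr (2 * s0 - 7) = x / 128"
    proof -
      have "2 powr (2 * s0 - 7) = 2 powr (2 * s0) / 2 powr 7" by (rule powr_diff)
      also have "2 powr (2 * s0) = x" unfolding x_def by (simp add: powr_mult_base powr_add[symmetric] power2_eq_square)
      finally show ?thesis by simp
    qed
    have "real n * x \<le> 3009 * x * tau n K0 L0 * 8 - 48"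
    proof -
      have e1: "real n * x = (x * (4 * real n)) / 4" by simp
      have e2: "3009 * x * tau n K0 L0 * 8 = 24072 * (x * tau n K0 L0)" by simp
      show ?thesis unfolding e1 e2 using xt x8 by linarith
    qed
    hence "real n * (x / 128) \<le> (R\<^sup>2 - 6) / 16" unfolding R2 C0sq_def by (simp add: field_simps)
    thus ?thesis unfolding pw by simp
  qed
  also have "\<dots> \<le> log 2 (real n) * exp (- real n * 2 powr (2 * s0 - 7))"
  proof -
    have "1 \<le> log 2 (real n)" using n2 by simp
    from mult_right_mono[OF this, of "exp (- real n * 2 powr (2 * s0 - 7))"] show ?thesis by simp
  qed
  finally show ?thesis unfolding p_def .
qed

end
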